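(* (a) There is a unique $p_0\in(0,1/2)$ with $\log\left(\frac{1-p_0}{p_0}\right)=\frac{1-p_0}{1-2p_0}$. Moreover, if $0<p\le p_0$ then $\log\left(\frac{1-p}{p}\right)\ge\frac{1-p}{1-2p}$. (b) Given $p\in(0,1)$, there is a unique $s_0\in(0,1)$ with $(1-p)(2-s_0)=\exp(1/s_0)(1-s_0)$. Moreover, if $p>1/2$ then $s_0>2-p^{-1}$, and if $p_0<p\le1/2$ then $s_0>\frac{1-2p}{1-p}$, where $p_0$ is as in (a). *)

theory Defs
  imports Complex_Main
begin

end

theory Submission
  imports Defs
begin

definition ff :: "real \<Rightarrow> real" where
  "ff p = ln ((1 - p) / p) - (1 - p) / (1 - 2*p)"

lemma ff_strict:
  assumes "0 < p" "p < q" "q < 1/2"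
  shows "ff q < ff p"
proof -
  have "(1-q)/q < (1-p)/p" using assms by (simp add: field_simps)
  moreover have "0 < (1-q)/q" using assms by simp
  ultimately have 1: "ln ((1-q)/q) < ln ((1-p)/p)" by simp
  have "(1-p)/(1-2*p) < (1-q)/(1-2*q)" using assms by (simp add: field_simps)
  with 1 show ?thesis unfolding ff_def by simp
qed

definition kk :: "real \<Rightarrow> real" where
  "kk s = exp (1/s) * (1 - s) / (2 - s)"

lemma kk_strict:
  assumes "0 < s" "s < t" "t \<le> 1"
  shows "kk t < kk s"
proof -
  have e: "exp (1/t) < exp (1/s)" using assms by (simp add: field_simps)
  have a: "(1-t)/(2-t) \<le> (1-s)/(2-s)" using assms by (simp add: field_simps)
  have b: "0 < (1-s)/(2-s)" using assms by simp
  have "exp (1/t) * ((1-t)/(2-t)) \<le> exp (1/t) * ((1-s)/(2-s))"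
    by (rule mult_left_mono[OF a]) simp
  also have "\<dots> < exp (1/s) * ((1-s)/(2-s))" by (rule mult_strict_right_mono[OF e b])
  finally show ?thesis unfolding kk_def by simp
qed

lemma eq_kk:
  assumes "s < 1"
  shows "((1 - p) * (2 - s) = exp (1 / s) * (1 - s)) \<longleftrightarrow> kk s = 1 - p"
  using assms unfolding kk_def by (auto simp: field_simps)

lemma kk_bound:
  assumes "0 < s0" "s0 < 1" "kk s0 = 1 - p" "0 < t" "t < 1" "kk t > 1 - p"
  shows "s0 > t"
proof (rule ccontr)
  assume "\<not> s0 > t"
  hence "s0 < t \<or> s0 = t" by auto
  thus False
  proof
    assume "s0 < t" thus False using kk_strict[of s0 t] assms by simp
  qed (use assms in simp)
qed

lemma aux_a:
  fixes E :: real assumes "E \<ge> 3"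
  shows "(1 - 1/(1+E))/(1-2*(1/(1+E))) = E/(E-1)"
proof -
  have 1: "1 - 1/(1+E) = E/(1+E)" using assms by (simp add: field_simps)
  have 2: "1-2*(1/(1+E)) = (E-1)/(1+E)" using assms by (simp add: field_simps)
  show ?thesis unfolding 1 2 using assms by (simp add: divide_divide_eq_left)
qed

lemma exp2: "exp (2::real) \<ge> 3"
  using exp_ge_add_one_self[of 2] by simp

lemma ff_exists: "\<exists>p0. 0 < p0 \<and> p0 < 1/2 \<and> ff p0 = 0"
proof -
  define a where "a = 1 / (1 + exp (2::real))"
  have e: "exp (2::real) \<ge> 3" by (rule exp2)
  have ep: "0 < 1 + exp (2::real)" using exp_gt_zero[of 2] by linarith
  have a0: "0 < a" unfolding a_def by (simp add: add_pos_pos)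
  have a1: "a < 2/5" unfolding a_def using e by (simp add: field_simps)
  have "(1-a)/a = exp 2" unfolding a_def using ep by (simp add: field_simps)
  hence la: "ln ((1-a)/a) = 2" by simp
  have "(1-a)/(1-2*a) = exp 2 / (exp 2 - 1)" unfolding a_def using aux_a[OF e] .
  also have "\<dots> \<le> 2" using e by (simp add: field_simps)
  finally have fa: "ff a \<ge> 0" unfolding ff_def using la by simp
  define b where "b = (2/5::real)"
  have "ln ((1-b)/b) \<le> (1-b)/b - 1" using ln_le_minus_one[of "(1-b)/b"] unfolding b_def by simp
  hence fb: "ff b \<le> 0" unfolding ff_def b_def by simp
  have "continuous_on {a..b} ff" unfolding ff_def b_def using a0 a1
    by (intro continuous_intros) (auto simp: field_simps)
  then obtain x where "a \<le> x" "x \<le> b" "ff x = 0"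
    using IVT2'[of ff b 0 a] fa fb a1 unfolding b_def by auto
  thus ?thesis using a0 unfolding b_def by (intro exI[of _ x]) auto
qed

theorem lemma16:
  shows "(\<exists>!p0::real. 0 < p0 \<and> p0 < 1/2 \<and> ln ((1 - p0) / p0) = (1 - p0) / (1 - 2*p0))
    \<and> (\<forall>p0 p::real. 0 < p0 \<and> p0 < 1/2 \<and> ln ((1 - p0) / p0) = (1 - p0) / (1 - 2*p0)
          \<and> 0 < p \<and> p \<le> p0 \<longrightarrow> ln ((1 - p) / p) \<ge> (1 - p) / (1 - 2*p))
    \<and> (\<forall>p::real. 0 < p \<and> p < 1 \<longrightarrow>
          (\<exists>!s0::real. 0 < s0 \<and> s0 < 1 \<and> (1 - p) * (2 - s0) = exp (1 / s0) * (1 - s0)))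
    \<and> (\<forall>p s0::real. 0 < p \<and> p < 1 \<and> 0 < s0 \<and> s0 < 1
          \<and> (1 - p) * (2 - s0) = exp (1 / s0) * (1 - s0) \<and> p > 1/2 \<longrightarrow> s0 > 2 - 1 / p)
    \<and> (\<forall>p0 p s0::real. 0 < p0 \<and> p0 < 1/2 \<and> ln ((1 - p0) / p0) = (1 - p0) / (1 - 2*p0)
          \<and> p0 < p \<and> p \<le> 1/2 \<and> 0 < s0 \<and> s0 < 1
          \<and> (1 - p) * (2 - s0) = exp (1 / s0) * (1 - s0) \<longrightarrow> s0 > (1 - 2*p) / (1 - p))"
proof (intro conjI)
  have ffeq: "\<And>p. ff p = 0 \<longleftrightarrow> ln ((1 - p) / p) = (1 - p) / (1 - 2*p)"
    unfolding ff_def by simp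
  show "\<exists>!p0::real. 0 < p0 \<and> p0 < 1/2 \<and> ln ((1 - p0) / p0) = (1 - p0) / (1 - 2*p0)"
  proof -
    obtain p0 where p0: "0 < p0" "p0 < 1/2" "ff p0 = 0" using ff_exists by blast
    have uq: "\<And>q. 0 < q \<and> q < 1/2 \<and> ff q = 0 \<Longrightarrow> q = p0"
    proof -
      fix q :: real assume q: "0 < q \<and> q < 1/2 \<and> ff q = 0"
      show "q = p0"
        using ff_strict[of q p0] ff_strict[of p0 q] q p0 by (cases q p0 rule: linorder_cases) auto
    qed
    show ?thesis
    proof (rule ex1I[of _ p0])
      show "0 < p0 \<and> p0 < 1/2 \<and> ln ((1 - p0) / p0) = (1 - p0) / (1 - 2*p0)"
        using p0 ffeq[of p0] by blast
    next
      fix q :: real assume "0 < q \<and> q < 1/2 \<and> ln ((1 - q) / q) = (1 - q) / (1 - 2*q)"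
      thus "q = p0" using uq ffeq[of q] by blast
    qed
  qed
  show "\<forall>p0 p::real. 0 < p0 \<and> p0 < 1/2 \<and> ln ((1 - p0) / p0) = (1 - p0) / (1 - 2*p0)
          \<and> 0 < p \<and> p \<le> p0 \<longrightarrow> ln ((1 - p) / p) \<ge> (1 - p) / (1 - 2*p)"
  proof (intro allI impI)
    fix p0 p :: real
    assume h: "0 < p0 \<and> p0 < 1/2 \<and> ln ((1 - p0) / p0) = (1 - p0) / (1 - 2*p0) \<and> 0 < p \<and> p \<le> p0"
    have fp0: "ff p0 = 0" using h unfolding ff_def by simp
    have "ff p \<ge> 0"
    proof (cases "p = p0")
      case True thus ?thesis using fp0 by simp
    next
      case False
      hence "p < p0" using h by simp
      thus ?thesis using h fp0 ff_strict[of p p0] by simp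
    qed
    thus "ln ((1 - p) / p) \<ge> (1 - p) / (1 - 2*p)" unfolding ff_def by simp
  qed
  show "\<forall>p::real. 0 < p \<and> p < 1 \<longrightarrow>
          (\<exists>!s0::real. 0 < s0 \<and> s0 < 1 \<and> (1 - p) * (2 - s0) = exp (1 / s0) * (1 - s0))"
  proof (intro allI impI)
    fix p :: real assume p: "0 < p \<and> p < 1"
    have k1: "kk 1 = 0" unfolding kk_def by simp
    have "kk (1/2) = exp 2 / 3" unfolding kk_def by simp
    hence kh: "kk (1/2) \<ge> 1" using exp2 by simp
    have "continuous_on {1/2..1} kk" unfolding kk_def
      by (intro continuous_intros) auto
    then obtain x where x: "1/2 \<le> x" "x \<le> 1" "kk x = 1 - p"
      using IVT2'[of kk 1 "1-p" "1/2"] k1 kh p by auto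
    have x1: "x < 1" using x k1 p by (cases "x = 1") auto
    have ex: "0 < x \<and> x < 1 \<and> (1 - p) * (2 - x) = exp (1 / x) * (1 - x)"
      using x x1 eq_kk[of x p] by simp
    show "\<exists>!s0::real. 0 < s0 \<and> s0 < 1 \<and> (1 - p) * (2 - s0) = exp (1 / s0) * (1 - s0)"
    proof (rule ex1I[of _ x])
      show "0 < x \<and> x < 1 \<and> (1 - p) * (2 - x) = exp (1 / x) * (1 - x)" by (rule ex)
    next
      fix y assume y: "0 < y \<and> y < 1 \<and> (1 - p) * (2 - y) = exp (1 / y) * (1 - y)"
      hence ky: "kk y = 1 - p" using eq_kk[of y p] by simp
      show "y = x"
        using kk_strict[of y x] kk_strict[of x y] ky x x1 y ex
        by (cases y x rule: linorder_cases) auto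
    qed
  qed
  show "\<forall>p s0::real. 0 < p \<and> p < 1 \<and> 0 < s0 \<and> s0 < 1
          \<and> (1 - p) * (2 - s0) = exp (1 / s0) * (1 - s0) \<and> p > 1/2 \<longrightarrow> s0 > 2 - 1 / p"
  proof (intro allI impI)
    fix p s0 :: real
    assume h: "0 < p \<and> p < 1 \<and> 0 < s0 \<and> s0 < 1
          \<and> (1 - p) * (2 - s0) = exp (1 / s0) * (1 - s0) \<and> p > 1/2"
    then have p0: "0 < p" and p1: "p < 1" and s0: "0 < s0" and s1: "s0 < 1"
      and eq: "(1 - p) * (2 - s0) = exp (1 / s0) * (1 - s0)" and ph: "p > 1/2" by auto
    define t where "t = 2 - 1/p"
    have t0: "0 < t" "t < 1" using p0 p1 ph unfolding t_def by (auto simp: field_simps)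
    have q: "(1-t)/(2-t) = 1 - p" using p0 unfolding t_def by (simp add: field_simps)
    have et: "exp (1/t) > 1" using t0 by simp
    have kt: "kk t = exp (1/t) * (1-p)" unfolding kk_def
      by (subst times_divide_eq_right[symmetric], subst q, rule refl)
    have "exp (1/t) * (1-p) > 1 * (1-p)"
      by (rule mult_strict_right_mono[OF et]) (use p1 in simp)
    hence ktt: "kk t > 1 - p" using kt by simp
    have ks: "kk s0 = 1 - p" using eq_kk[OF s1] eq by blast
    have "s0 > t" by (rule kk_bound[OF s0 s1 ks t0 ktt])
    thus "s0 > 2 - 1/p" unfolding t_def .
  qed
  show "\<forall>p0 p s0::real. 0 < p0 \<and> p0 < 1/2 \<and> ln ((1 - p0) / p0) = (1 - p0) / (1 - 2*p0)
          \<and> p0 < p \<and> p \<le> 1/2 \<and> 0 < s0 \<and> s0 < 1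
          \<and> (1 - p) * (2 - s0) = exp (1 / s0) * (1 - s0) \<longrightarrow> s0 > (1 - 2*p) / (1 - p)"
  proof (intro allI impI)
    fix p0 p s0 :: real
    assume h: "0 < p0 \<and> p0 < 1/2 \<and> ln ((1 - p0) / p0) = (1 - p0) / (1 - 2*p0)
          \<and> p0 < p \<and> p \<le> 1/2 \<and> 0 < s0 \<and> s0 < 1
          \<and> (1 - p) * (2 - s0) = exp (1 / s0) * (1 - s0)"
    then have a0: "0 < p0" and a1: "p0 < 1/2" and lp0: "ln ((1 - p0) / p0) = (1 - p0) / (1 - 2*p0)"
      and pp: "p0 < p" and ph: "p \<le> 1/2" and s0: "0 < s0" and s1: "s0 < 1"
      and eq: "(1 - p) * (2 - s0) = exp (1 / s0) * (1 - s0)" by auto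
    show "s0 > (1 - 2*p) / (1 - p)"
    proof (cases "p = 1/2")
      case True show ?thesis unfolding True using s0 by simp
    next
      case False
      hence p2: "p < 1/2" using ph by simp
      have pos: "0 < p" using a0 pp by simp
      define t where "t = (1 - 2*p) / (1 - p)"
      have t0: "0 < t" "t < 1" using pos p2 unfolding t_def by (auto simp: field_simps)
      have q: "(1-t)/(2-t) = p" using p2 unfolding t_def by (simp add: field_simps)
      have fp0: "ff p0 = 0" using lp0 unfolding ff_def by simp
      have "ff p < 0" using ff_strict[OF a0 pp p2] fp0 by simp
      hence "ln ((1-p)/p) < (1-p)/(1-2*p)" unfolding ff_def by simp
      hence "exp (ln ((1-p)/p)) < exp ((1-p)/(1-2*p))" by (simp only: exp_less_cancel_iff)
      moreover have "exp (ln ((1-p)/p)) = (1-p)/p" using pos p2 by simp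
      moreover have "(1-p)/(1-2*p) = 1/t" unfolding t_def by simp
      ultimately have "(1-p)/p < exp (1/t)" by simp
      hence lt: "1 - p < exp (1/t) * p" using pos by (simp add: divide_less_eq)
      have kt: "kk t = exp (1/t) * p" unfolding kk_def
        by (subst times_divide_eq_right[symmetric], subst q, rule refl)
      have ktt: "kk t > 1 - p" using kt lt by simp
      have ks: "kk s0 = 1 - p" using eq_kk[OF s1] eq by blast
      have "s0 > t" by (rule kk_bound[OF s0 s1 ks t0 ktt])
      thus ?thesis unfolding t_def .
    qed
  qed
qed

end
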